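(* Let $n\ge3$ and let $\{e_{\alpha_i},f_{\alpha_i}\mid 1\leq i\leq n\}$ be Chevalley generators of the simple Lie algebra $\mathfrak{g}$ of type $D_n$, where the simple roots are labeled so that $\alpha_1,\alpha_2,\dots,\alpha_{n-1}$ form the chain $1-2-\cdots-(n-1)$ and $\alpha_n$ is joined (by a single bond) only to $\alpha_2$. Put $$E=[f_{\alpha_{n-1}},[\cdots,[f_{\alpha_2},f_{\alpha_n}]\cdots]],\qquad F=[[\cdots[e_{\alpha_n},e_{\alpha_2}],\cdots],e_{\alpha_{n-1}}].$$ Then there is a Lie algebra homomorphism $\mathrm{gim}(M_n)\to\mathfrak{g}$ with $e_i\mapsto e_{\alpha_i}$, $f_i\mapsto f_{\alpha_i}$ for $1\le i\le n-1$, and $e_n\mapsto E$, $f_n\mapsto F$.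
   Context: For $n\geq 3$, $M_n=(m_{i,j})$ is the $n\times n$ integer matrix with $m_{i,i}=2$, $m_{i,i+1}=m_{i+1,i}=-1$ ($1\le i\le n-1$), $m_{1,n}=m_{n,1}=1$, all other entries $0$. $\mathrm{gim}(M_n)$ is the complex Lie algebra generated by $e_i,f_i,h_i$ ($1\le i\le n$) with relations: (R1) $[h_i,e_j]=m_{i,j}e_j$, $[h_i,f_j]=-m_{i,j}f_j$, $[e_i,f_i]=h_i$ for all $i,j$; (R2) for $i\ne j$ with $m_{i,j}\le0$: $[e_i,f_j]=0=[f_i,e_j]$, $(\mathrm{ad}\,e_i)^{1-m_{i,j}}e_j=0=(\mathrm{ad}\,f_i)^{1-m_{i,j}}f_j$; (R3) for $i\ne j$ with $m_{i,j}>0$: $[e_i,e_j]=0=[f_i,f_j]$, $(\mathrm{ad}\,e_i)^{m_{i,j}+1}f_j=0=(\mathrm{ad}\,f_i)^{m_{i,j}+1}e_j$. *)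

theory Defs
  imports Main "HOL.Complex"
begin

record 'a lie_alg =
  carrier :: "'a set"
  lzero :: 'a
  ladd :: "'a \<Rightarrow> 'a \<Rightarrow> 'a"
  lsmul :: "complex \<Rightarrow> 'a \<Rightarrow> 'a"
  lbr :: "'a \<Rightarrow> 'a \<Rightarrow> 'a"

definition lie_algebra :: "('a, 'b) lie_alg_scheme \<Rightarrow> bool" where
  "lie_algebra L \<longleftrightarrow>
     lzero L \<in> carrier L \<and>
     (\<forall>x\<in>carrier L. \<forall>y\<in>carrier L. ladd L x y \<in> carrier L \<and> lbr L x y \<in> carrier L) \<and>
     (\<forall>c. \<forall>x\<in>carrier L. lsmul L c x \<in> carrier L) \<and>
     (\<forall>x\<in>carrier L. \<forall>y\<in>carrier L. \<forall>z\<in>carrier L.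
        ladd L (ladd L x y) z = ladd L x (ladd L y z)) \<and>
     (\<forall>x\<in>carrier L. \<forall>y\<in>carrier L. ladd L x y = ladd L y x) \<and>
     (\<forall>x\<in>carrier L. ladd L (lzero L) x = x) \<and>
     (\<forall>x\<in>carrier L. ladd L x (lsmul L (-1) x) = lzero L) \<and>
     (\<forall>c. \<forall>x\<in>carrier L. \<forall>y\<in>carrier L. lsmul L c (ladd L x y) = ladd L (lsmul L c x) (lsmul L c y)) \<and>
     (\<forall>c d. \<forall>x\<in>carrier L. lsmul L (c + d) x = ladd L (lsmul L c x) (lsmul L d x)) \<and>
     (\<forall>c d. \<forall>x\<in>carrier L. lsmul L (c * d) x = lsmul L c (lsmul L d x)) \<and>
     (\<forall>x\<in>carrier L. lsmul L 1 x = x) \<and>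
     (\<forall>x\<in>carrier L. \<forall>y\<in>carrier L. \<forall>z\<in>carrier L.
        lbr L (ladd L x y) z = ladd L (lbr L x z) (lbr L y z) \<and>
        lbr L z (ladd L x y) = ladd L (lbr L z x) (lbr L z y)) \<and>
     (\<forall>c. \<forall>x\<in>carrier L. \<forall>y\<in>carrier L.
        lbr L (lsmul L c x) y = lsmul L c (lbr L x y) \<and>
        lbr L x (lsmul L c y) = lsmul L c (lbr L x y)) \<and>
     (\<forall>x\<in>carrier L. lbr L x x = lzero L) \<and>
     (\<forall>x\<in>carrier L. \<forall>y\<in>carrier L. \<forall>z\<in>carrier L.
        ladd L (lbr L x (lbr L y z)) (ladd L (lbr L y (lbr L z x)) (lbr L z (lbr L x y))) = lzero L)"

definition lie_hom :: "('a, 'c) lie_alg_scheme \<Rightarrow> ('b, 'd) lie_alg_scheme \<Rightarrow> ('a \<Rightarrow> 'b) \<Rightarrow> bool" where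
  "lie_hom L M \<phi> \<longleftrightarrow>
     (\<forall>x\<in>carrier L. \<phi> x \<in> carrier M) \<and>
     (\<forall>x\<in>carrier L. \<forall>y\<in>carrier L. \<phi> (ladd L x y) = ladd M (\<phi> x) (\<phi> y)) \<and>
     (\<forall>c. \<forall>x\<in>carrier L. \<phi> (lsmul L c x) = lsmul M c (\<phi> x)) \<and>
     (\<forall>x\<in>carrier L. \<forall>y\<in>carrier L. \<phi> (lbr L x y) = lbr M (\<phi> x) (\<phi> y))"

definition lie_subspace :: "('a, 'b) lie_alg_scheme \<Rightarrow> 'a set \<Rightarrow> bool" where
  "lie_subspace L S \<longleftrightarrow> S \<subseteq> carrier L \<and> lzero L \<in> S \<and>
     (\<forall>x\<in>S. \<forall>y\<in>S. ladd L x y \<in> S) \<and> (\<forall>c. \<forall>x\<in>S. lsmul L c x \<in> S)"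

definition lie_subalgebra :: "('a, 'b) lie_alg_scheme \<Rightarrow> 'a set \<Rightarrow> bool" where
  "lie_subalgebra L S \<longleftrightarrow> lie_subspace L S \<and> (\<forall>x\<in>S. \<forall>y\<in>S. lbr L x y \<in> S)"

definition lie_ideal :: "('a, 'b) lie_alg_scheme \<Rightarrow> 'a set \<Rightarrow> bool" where
  "lie_ideal L I \<longleftrightarrow> lie_subspace L I \<and> (\<forall>x\<in>carrier L. \<forall>y\<in>I. lbr L x y \<in> I)"

definition simple_lie_algebra :: "('a, 'b) lie_alg_scheme \<Rightarrow> bool" where
  "simple_lie_algebra L \<longleftrightarrow> lie_algebra L \<and>
     (\<exists>x\<in>carrier L. \<exists>y\<in>carrier L. lbr L x y \<noteq> lzero L) \<and>
     (\<forall>I. lie_ideal L I \<longrightarrow> I = {lzero L} \<or> I = carrier L)"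

definition lin_comb :: "('a, 'b) lie_alg_scheme \<Rightarrow> (complex \<times> 'a) list \<Rightarrow> 'a" where
  "lin_comb L cbs = foldr (\<lambda>(c, b) acc. ladd L (lsmul L c b) acc) cbs (lzero L)"

definition finite_dim_lie :: "('a, 'b) lie_alg_scheme \<Rightarrow> bool" where
  "finite_dim_lie L \<longleftrightarrow> (\<exists>bs. set bs \<subseteq> carrier L \<and>
     (\<forall>x\<in>carrier L. \<exists>cs. length cs = length bs \<and> x = lin_comb L (zip cs bs)))"

definition generates :: "('a, 'b) lie_alg_scheme \<Rightarrow> 'a set \<Rightarrow> bool" where
  "generates L X \<longleftrightarrow> (\<forall>S. lie_subalgebra L S \<and> X \<subseteq> S \<longrightarrow> S = carrier L)"

definition ad_pow :: "('a, 'b) lie_alg_scheme \<Rightarrow> nat \<Rightarrow> 'a \<Rightarrow> 'a \<Rightarrow> 'a" where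
  "ad_pow L k x y = ((\<lambda>z. lbr L x z) ^^ k) y"

datatype 'g lterm = Gen 'g | TZero | TAdd "'g lterm" "'g lterm"
  | TSmul complex "'g lterm" | TBr "'g lterm" "'g lterm"

text \<open>The smallest congruence containing the relations \<open>R\<close> and making the term
  algebra a complex Lie algebra; the quotient is the Lie algebra presented by
  the generators and the relations \<open>R\<close>.\<close>
inductive lcong :: "('g lterm \<times> 'g lterm) set \<Rightarrow> 'g lterm \<Rightarrow> 'g lterm \<Rightarrow> bool" for R where
  rel: "(s, t) \<in> R \<Longrightarrow> lcong R s t"
| refl: "lcong R t t"
| sym: "lcong R s t \<Longrightarrow> lcong R t s"
| trans: "lcong R s t \<Longrightarrow> lcong R t u \<Longrightarrow> lcong R s u"
| cong_add: "lcong R s s' \<Longrightarrow> lcong R t t' \<Longrightarrow> lcong R (TAdd s t) (TAdd s' t')"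
| cong_smul: "lcong R s s' \<Longrightarrow> lcong R (TSmul c s) (TSmul c s')"
| cong_br: "lcong R s s' \<Longrightarrow> lcong R t t' \<Longrightarrow> lcong R (TBr s t) (TBr s' t')"
| add_assoc: "lcong R (TAdd (TAdd s t) u) (TAdd s (TAdd t u))"
| add_comm: "lcong R (TAdd s t) (TAdd t s)"
| add_zero: "lcong R (TAdd TZero s) s"
| add_neg: "lcong R (TAdd s (TSmul (-1) s)) TZero"
| smul_add: "lcong R (TSmul c (TAdd s t)) (TAdd (TSmul c s) (TSmul c t))"
| add_smul: "lcong R (TSmul (c + d) s) (TAdd (TSmul c s) (TSmul d s))"
| smul_smul: "lcong R (TSmul (c * d) s) (TSmul c (TSmul d s))"
| smul_one: "lcong R (TSmul 1 s) s"
| br_add_left: "lcong R (TBr (TAdd s t) u) (TAdd (TBr s u) (TBr t u))"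
| br_add_right: "lcong R (TBr u (TAdd s t)) (TAdd (TBr u s) (TBr u t))"
| br_smul_left: "lcong R (TBr (TSmul c s) t) (TSmul c (TBr s t))"
| br_smul_right: "lcong R (TBr s (TSmul c t)) (TSmul c (TBr s t))"
| br_alt: "lcong R (TBr s s) TZero"
| jacobi: "lcong R (TAdd (TBr s (TBr t u)) (TAdd (TBr t (TBr u s)) (TBr u (TBr s t)))) TZero"

definition lclass :: "('g lterm \<times> 'g lterm) set \<Rightarrow> 'g lterm \<Rightarrow> 'g lterm set" where
  "lclass R t = {s. lcong R t s}"

definition presented_lie :: "('g lterm \<times> 'g lterm) set \<Rightarrow> 'g lterm set lie_alg" where
  "presented_lie R = \<lparr> carrier = range (lclass R),
     lzero = lclass R TZero,
     ladd = (\<lambda>A B. \<Union>a\<in>A. \<Union>b\<in>B. lclass R (TAdd a b)),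
     lsmul = (\<lambda>c A. \<Union>a\<in>A. lclass R (TSmul c a)),
     lbr = (\<lambda>A B. \<Union>a\<in>A. \<Union>b\<in>B. lclass R (TBr a b)) \<rparr>"

datatype gim_gen = GE nat | GF nat | GH nat

definition tad_pow :: "nat \<Rightarrow> 'g lterm \<Rightarrow> 'g lterm \<Rightarrow> 'g lterm" where
  "tad_pow k x y = ((\<lambda>z. TBr x z) ^^ k) y"

definition gim_rels :: "nat \<Rightarrow> (nat \<Rightarrow> nat \<Rightarrow> int) \<Rightarrow> (gim_gen lterm \<times> gim_gen lterm) set" where
  "gim_rels n m =
     {(TBr (Gen (GH i)) (Gen (GE j)), TSmul (of_int (m i j)) (Gen (GE j))) | i j. i \<in> {1..n} \<and> j \<in> {1..n}} \<union>
     {(TBr (Gen (GH i)) (Gen (GF j)), TSmul (of_int (- m i j)) (Gen (GF j))) | i j. i \<in> {1..n} \<and> j \<in> {1..n}} \<union>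
     {(TBr (Gen (GE i)) (Gen (GF i)), Gen (GH i)) | i. i \<in> {1..n}} \<union>
     {(TBr (Gen (GE i)) (Gen (GF j)), TZero) | i j. i \<in> {1..n} \<and> j \<in> {1..n} \<and> i \<noteq> j \<and> m i j \<le> 0} \<union>
     {(TBr (Gen (GF i)) (Gen (GE j)), TZero) | i j. i \<in> {1..n} \<and> j \<in> {1..n} \<and> i \<noteq> j \<and> m i j \<le> 0} \<union>
     {(tad_pow (nat (1 - m i j)) (Gen (GE i)) (Gen (GE j)), TZero) | i j. i \<in> {1..n} \<and> j \<in> {1..n} \<and> i \<noteq> j \<and> m i j \<le> 0} \<union>
     {(tad_pow (nat (1 - m i j)) (Gen (GF i)) (Gen (GF j)), TZero) | i j. i \<in> {1..n} \<and> j \<in> {1..n} \<and> i \<noteq> j \<and> m i j \<le> 0} \<union>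
     {(TBr (Gen (GE i)) (Gen (GE j)), TZero) | i j. i \<in> {1..n} \<and> j \<in> {1..n} \<and> i \<noteq> j \<and> m i j > 0} \<union>
     {(TBr (Gen (GF i)) (Gen (GF j)), TZero) | i j. i \<in> {1..n} \<and> j \<in> {1..n} \<and> i \<noteq> j \<and> m i j > 0} \<union>
     {(tad_pow (nat (m i j + 1)) (Gen (GE i)) (Gen (GF j)), TZero) | i j. i \<in> {1..n} \<and> j \<in> {1..n} \<and> i \<noteq> j \<and> m i j > 0} \<union>
     {(tad_pow (nat (m i j + 1)) (Gen (GF i)) (Gen (GE j)), TZero) | i j. i \<in> {1..n} \<and> j \<in> {1..n} \<and> i \<noteq> j \<and> m i j > 0}"

definition gim :: "nat \<Rightarrow> (nat \<Rightarrow> nat \<Rightarrow> int) \<Rightarrow> gim_gen lterm set lie_alg" where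
  "gim n m = presented_lie (gim_rels n m)"

definition gim_gen_elt :: "nat \<Rightarrow> (nat \<Rightarrow> nat \<Rightarrow> int) \<Rightarrow> gim_gen \<Rightarrow> gim_gen lterm set" where
  "gim_gen_elt n m x = lclass (gim_rels n m) (Gen x)"

definition M_mat :: "nat \<Rightarrow> nat \<Rightarrow> nat \<Rightarrow> int" where
  "M_mat n i j = (if i = j then 2
     else if (i = 1 \<and> j = n) \<or> (i = n \<and> j = 1) then 1
     else if i + 1 = j \<or> j + 1 = i then -1 else 0)"

definition D_cartan :: "nat \<Rightarrow> nat \<Rightarrow> nat \<Rightarrow> int" where
  "D_cartan n i j = (if i = j then 2
     else if (i + 1 = j \<or> j + 1 = i) \<and> i < n \<and> j < n then -1
     else if (i = 2 \<and> j = n) \<or> (i = n \<and> j = 2) then -1 else 0)"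

definition chevalley_generators ::
  "('a, 'b) lie_alg_scheme \<Rightarrow> nat \<Rightarrow> (nat \<Rightarrow> nat \<Rightarrow> int) \<Rightarrow> (nat \<Rightarrow> 'a) \<Rightarrow> (nat \<Rightarrow> 'a) \<Rightarrow> (nat \<Rightarrow> 'a) \<Rightarrow> bool" where
  "chevalley_generators L n A e f h \<longleftrightarrow>
     simple_lie_algebra L \<and> finite_dim_lie L \<and>
     (\<forall>i\<in>{1..n}. e i \<in> carrier L \<and> f i \<in> carrier L \<and> h i \<in> carrier L) \<and>
     generates L (e ` {1..n} \<union> f ` {1..n}) \<and>
     (\<forall>i\<in>{1..n}. \<forall>j\<in>{1..n}.
        lbr L (h i) (h j) = lzero L \<and>
        lbr L (e i) (f j) = (if i = j then h i else lzero L) \<and>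
        lbr L (h i) (e j) = lsmul L (of_int (A i j)) (e j) \<and>
        lbr L (h i) (f j) = lsmul L (of_int (- A i j)) (f j) \<and>
        (i \<noteq> j \<longrightarrow> ad_pow L (nat (1 - A i j)) (e i) (e j) = lzero L \<and>
                   ad_pow L (nat (1 - A i j)) (f i) (f j) = lzero L))"

end

theory Submission
  imports Defs
begin
locale lie =
  fixes L :: "('a, 'b) lie_alg_scheme" (structure)
  assumes la: "lie_algebra L"
begin

abbreviation "C \<equiv> carrier L"
abbreviation "Z \<equiv> lzero L"
abbreviation "Ad \<equiv> ladd L"
abbreviation "Sm \<equiv> lsmul L"
abbreviation "B \<equiv> lbr L"


lemma ax_zero: "Z \<in> C" using la unfolding lie_algebra_def by (elim conjE) assumption
lemma ax_cl: "\<forall>x\<in>C. \<forall>y\<in>C. Ad x y \<in> C \<and> B x y \<in> C" using la unfolding lie_algebra_def by (elim conjE) assumption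
lemma ax_smc: "\<forall>c. \<forall>x\<in>C. Sm c x \<in> C" using la unfolding lie_algebra_def by (elim conjE) assumption
lemma ax_assoc: "\<forall>x\<in>C. \<forall>y\<in>C. \<forall>z\<in>C. Ad (Ad x y) z = Ad x (Ad y z)" using la unfolding lie_algebra_def by (elim conjE) assumption
lemma ax_comm: "\<forall>x\<in>C. \<forall>y\<in>C. Ad x y = Ad y x" using la unfolding lie_algebra_def by (elim conjE) assumption
lemma ax_zadd: "\<forall>x\<in>C. Ad Z x = x" using la unfolding lie_algebra_def by (elim conjE) assumption
lemma ax_neg: "\<forall>x\<in>C. Ad x (Sm (-1) x) = Z" using la unfolding lie_algebra_def by (elim conjE) assumption
lemma ax_smadd: "\<forall>c. \<forall>x\<in>C. \<forall>y\<in>C. Sm c (Ad x y) = Ad (Sm c x) (Sm c y)" using la unfolding lie_algebra_def by (elim conjE) assumption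
lemma ax_addsm: "\<forall>c d. \<forall>x\<in>C. Sm (c + d) x = Ad (Sm c x) (Sm d x)" using la unfolding lie_algebra_def by (elim conjE) assumption
lemma ax_smsm: "\<forall>c d. \<forall>x\<in>C. Sm (c * d) x = Sm c (Sm d x)" using la unfolding lie_algebra_def by (elim conjE) assumption
lemma ax_one: "\<forall>x\<in>C. Sm 1 x = x" using la unfolding lie_algebra_def by (elim conjE) assumption
lemma ax_bradd: "\<forall>x\<in>C. \<forall>y\<in>C. \<forall>z\<in>C. B (Ad x y) z = Ad (B x z) (B y z) \<and> B z (Ad x y) = Ad (B z x) (B z y)" using la unfolding lie_algebra_def by (elim conjE) assumption
lemma ax_brsm: "\<forall>c. \<forall>x\<in>C. \<forall>y\<in>C. B (Sm c x) y = Sm c (B x y) \<and> B x (Sm c y) = Sm c (B x y)" using la unfolding lie_algebra_def by (elim conjE) assumption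
lemma ax_alt: "\<forall>x\<in>C. B x x = Z" using la unfolding lie_algebra_def by (elim conjE) assumption
lemma ax_jac: "\<forall>x\<in>C. \<forall>y\<in>C. \<forall>z\<in>C. Ad (B x (B y z)) (Ad (B y (B z x)) (B z (B x y))) = Z" using la unfolding lie_algebra_def by (elim conjE) assumption

lemma zero_c[simp]: "Z \<in> C" by (rule ax_zero)
lemma add_c[simp]: "x \<in> C \<Longrightarrow> y \<in> C \<Longrightarrow> Ad x y \<in> C" using ax_cl by blast
lemma br_c[simp]: "x \<in> C \<Longrightarrow> y \<in> C \<Longrightarrow> B x y \<in> C" using ax_cl by blast
lemma sm_c[simp]: "x \<in> C \<Longrightarrow> Sm c x \<in> C" using ax_smc by blast
lemma add_assoc: "x \<in> C \<Longrightarrow> y \<in> C \<Longrightarrow> z \<in> C \<Longrightarrow> Ad (Ad x y) z = Ad x (Ad y z)"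
  using ax_assoc by blast
lemma add_comm: "x \<in> C \<Longrightarrow> y \<in> C \<Longrightarrow> Ad x y = Ad y x"
  using ax_comm by blast
lemma zero_add[simp]: "x \<in> C \<Longrightarrow> Ad Z x = x"
  using ax_zadd by blast
lemma add_zero[simp]: "x \<in> C \<Longrightarrow> Ad x Z = x"
  using add_comm[of x Z] by simp
lemma add_neg: "x \<in> C \<Longrightarrow> Ad x (Sm (-1) x) = Z"
  using ax_neg by blast
lemma sm_add: "x \<in> C \<Longrightarrow> y \<in> C \<Longrightarrow> Sm c (Ad x y) = Ad (Sm c x) (Sm c y)"
  using ax_smadd by blast
lemma add_sm: "x \<in> C \<Longrightarrow> Sm (c + d) x = Ad (Sm c x) (Sm d x)"
  using ax_addsm by blast
lemma sm_sm: "x \<in> C \<Longrightarrow> Sm c (Sm d x) = Sm (c * d) x"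
  using ax_smsm by metis
lemma sm_one[simp]: "x \<in> C \<Longrightarrow> Sm 1 x = x"
  using ax_one by blast
lemma br_add_l: "x \<in> C \<Longrightarrow> y \<in> C \<Longrightarrow> z \<in> C \<Longrightarrow> B (Ad x y) z = Ad (B x z) (B y z)"
  using ax_bradd by blast
lemma br_add_r: "x \<in> C \<Longrightarrow> y \<in> C \<Longrightarrow> z \<in> C \<Longrightarrow> B z (Ad x y) = Ad (B z x) (B z y)"
  using ax_bradd by blast
lemma br_sm_l: "x \<in> C \<Longrightarrow> y \<in> C \<Longrightarrow> B (Sm c x) y = Sm c (B x y)"
  using ax_brsm by blast
lemma br_sm_r: "x \<in> C \<Longrightarrow> y \<in> C \<Longrightarrow> B x (Sm c y) = Sm c (B x y)"
  using ax_brsm by blast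
lemma br_self[simp]: "x \<in> C \<Longrightarrow> B x x = Z"
  using ax_alt by blast
lemma jacobi: "x \<in> C \<Longrightarrow> y \<in> C \<Longrightarrow> z \<in> C \<Longrightarrow>
   Ad (B x (B y z)) (Ad (B y (B z x)) (B z (B x y))) = Z"
  using ax_jac by blast

lemma add_left_cancel: assumes "x \<in> C" "y \<in> C" "z \<in> C" "Ad x y = Ad x z" shows "y = z"
proof -
  have "Ad (Sm (-1) x) (Ad x y) = Ad (Sm (-1) x) (Ad x z)" using assms by simp
  moreover have "Ad (Sm (-1) x) (Ad x y) = y"
    using assms add_assoc[of "Sm (-1) x" x y, symmetric] add_comm[of "Sm (-1) x" x] add_neg by simp
  moreover have "Ad (Sm (-1) x) (Ad x z) = z"
    using assms add_assoc[of "Sm (-1) x" x z, symmetric] add_comm[of "Sm (-1) x" x] add_neg by simp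
  ultimately show ?thesis by simp
qed

lemma sm_zero_c[simp]: "x \<in> C \<Longrightarrow> Sm 0 x = Z"
proof -
  assume x: "x \<in> C"
  have "Ad (Sm 0 x) (Sm 0 x) = Ad (Sm 0 x) Z" using add_sm[OF x, of 0 0] x by simp
  then show ?thesis using x add_left_cancel by (metis sm_c zero_c)
qed

lemma sm_Z[simp]: "Sm c Z = Z"
proof -
  have "Sm c Z = Sm c (Sm 0 Z)" by simp
  also have "\<dots> = Sm (c * 0) Z" by (rule sm_sm) simp
  finally show ?thesis by simp
qed

lemma br_Z_l[simp]: "x \<in> C \<Longrightarrow> B Z x = Z"
  using br_sm_l[of x x 0] by simp
lemma br_Z_r[simp]: "x \<in> C \<Longrightarrow> B x Z = Z"
  using br_sm_r[of x x 0] by simp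

lemma neg_unique: assumes "x \<in> C" "y \<in> C" "Ad x y = Z" shows "y = Sm (-1) x"
  using add_left_cancel[of x y "Sm (-1) x"] assms add_neg by simp

lemma anti: assumes x: "x \<in> C" and y: "y \<in> C" shows "B x y = Sm (-1) (B y x)"
proof -
  have "Z = B (Ad y x) (Ad y x)" using assms by simp
  also have "\<dots> = Ad (B y (Ad y x)) (B x (Ad y x))" by (rule br_add_l) (simp_all add: assms)
  also have "B y (Ad y x) = B y x" using assms br_add_r[of y x y] by simp
  also have "B x (Ad y x) = B x y" using assms br_add_r[of y x x] by simp
  finally have "Ad (B y x) (B x y) = Z" by simp
  then show ?thesis using neg_unique assms by simp
qed

lemma anti0: "x \<in> C \<Longrightarrow> y \<in> C \<Longrightarrow> B x y = Z \<Longrightarrow> B y x = Z"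
  using anti[of y x] by simp

lemma sm_neg_neg[simp]: "x \<in> C \<Longrightarrow> Sm (-1) (Sm (-1) x) = x"
  by (simp add: sm_sm)

lemma leib: assumes "x \<in> C" "y \<in> C" "z \<in> C"
  shows "B x (B y z) = Ad (B (B x y) z) (B y (B x z))"
proof -
  define a where "a = B x (B y z)"
  define b where "b = B (B x y) z"
  define c where "c = B y (B x z)"
  have C: "a \<in> C" "b \<in> C" "c \<in> C" using assms by (simp_all add: a_def b_def c_def)
  have j: "Ad a (Ad (B y (B z x)) (B z (B x y))) = Z" unfolding a_def using jacobi assms by blast
  have 1: "B y (B z x) = Sm (-1) c" unfolding c_def using assms anti[of z x] br_sm_r by simp
  have 2: "B z (B x y) = Sm (-1) b" unfolding b_def using assms anti[of z "B x y"] by simp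
  have "Ad a (Sm (-1) (Ad c b)) = Z" using j unfolding 1 2 using C sm_add by simp
  then have "Sm (-1) (Ad c b) = Sm (-1) a" using neg_unique C by simp
  then have "Sm (-1) (Sm (-1) (Ad c b)) = Sm (-1) (Sm (-1) a)" by simp
  then have "Ad c b = a" using C by simp
  then have "a = Ad b c" using C add_comm[of c b] by simp
  then show ?thesis unfolding a_def b_def c_def .
qed

lemma double_zero: assumes x: "x \<in> C" and "Ad x x = Z" shows "x = Z"
proof -
  have "Sm (1+1) x = Ad x x" using add_sm[OF x, of 1 1] x by simp
  then have "Sm 2 x = Z" using assms by (simp add: one_add_one)
  then have "Sm (1/2) (Sm 2 x) = Z" by simp
  moreover have "Sm (1/2) (Sm 2 x) = Sm ((1/2) * 2) x" using x by (rule sm_sm)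
  ultimately show ?thesis using x by simp
qed

lemma self_neg_zero: assumes "x \<in> C" "x = Sm (-1) x" shows "x = Z"
proof -
  have "Ad x x = Z" using add_neg[OF assms(1)] unfolding assms(2)[symmetric] .
  then show ?thesis using double_zero assms(1) by blast
qed

lemma sm_Ad_combine: "x \<in> C \<Longrightarrow> Ad (Sm c x) (Sm d x) = Sm (c + d) x"
  by (simp add: add_sm)

end

context lie begin

lemma zero_sum_neg: "p \<in> C \<Longrightarrow> q \<in> C \<Longrightarrow> Ad p q = Z \<Longrightarrow> p = Sm (-1) q"
proof -
  assume a: "p \<in> C" "q \<in> C" "Ad p q = Z"
  have "Ad q p = Z" using a add_comm[of p q] by metis
  then show ?thesis using neg_unique[of q p] a by blast
qed

lemma comm0: assumes "a \<in> C" "u \<in> C" "v \<in> C" "B a u = Z" "B a v = Z"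
  shows "B a (B u v) = Z"
  using leib[of a u v] assms by simp

lemma ad2_r0: assumes "a \<in> C" "u \<in> C" "v \<in> C" "B a v = Z"
  shows "B a (B a (B u v)) = B (B a (B a u)) v"
proof -
  have 1: "B a (B u v) = B (B a u) v" using leib[of a u v] assms by simp
  have "B a (B (B a u) v) = Ad (B (B a (B a u)) v) (B (B a u) (B a v))" using assms by (intro leib) simp_all
  then show ?thesis using 1 assms by simp
qed

lemma ad2_l0: assumes "a \<in> C" "u \<in> C" "v \<in> C" "B a u = Z"
  shows "B a (B a (B u v)) = B u (B a (B a v))"
proof -
  have 1: "B a (B u v) = B u (B a v)" using leib[of a u v] assms by simp
  have "B a (B u (B a v)) = Ad (B (B a u) (B a v)) (B u (B a (B a v)))" using assms by (intro leib) simp_all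
  then show ?thesis using 1 assms by simp
qed

lemma ad2_split0: assumes C: "a \<in> C" "u \<in> C" "v \<in> C"
  and 0: "B a (B a u) = Z" "B a (B a v) = Z" "B a (B a (B u v)) = Z"
  shows "B (B a u) (B a v) = Z"
proof -
  define t where "t = B (B a u) (B a v)"
  have 1: "B a (B u v) = Ad (B (B a u) v) (B u (B a v))" using C by (intro leib) simp_all
  have 2: "B a (B (B a u) v) = Ad (B (B a (B a u)) v) t" unfolding t_def using C by (intro leib) simp_all
  have 3: "B a (B u (B a v)) = Ad t (B u (B a (B a v)))" unfolding t_def using C by (intro leib) simp_all
  have "Z = B a (Ad (B (B a u) v) (B u (B a v)))" using 0(3) 1 by simp
  also have "\<dots> = Ad (B a (B (B a u) v)) (B a (B u (B a v)))" using C by (intro br_add_r) simp_all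
  also have "\<dots> = Ad t t" unfolding 2 3 using 0 C t_def by simp
  finally have "Ad t t = Z" by simp
  then show ?thesis using double_zero[of t] C unfolding t_def by simp
qed

lemma weight_br: assumes C: "h \<in> C" "u \<in> C" "v \<in> C"
  and "B h u = Sm c u" "B h v = Sm d v"
  shows "B h (B u v) = Sm (c + d) (B u v)"
proof -
  have "B h (B u v) = Ad (B (B h u) v) (B u (B h v))" using C by (intro leib) simp_all
  also have "\<dots> = Ad (Sm c (B u v)) (Sm d (B u v))" using assms br_sm_l br_sm_r by simp
  finally show ?thesis using add_sm[of "B u v" c d] C by simp
qed

lemma trickT: assumes C: "a \<in> C" "b \<in> C" "X \<in> C"
  and h1: "B a (B a X) = Z" and h2: "B b X = Z" and h3: "B a (B a b) = Z"
  shows "B a (B b (B a X)) = Z"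
proof -
  define U where "U = B a X"
  define Y where "Y = B a b"
  have CU: "U \<in> C" "Y \<in> C" using C by (simp_all add: U_def Y_def)
  have aU: "B a U = Z" using h1 U_def by simp
  have 1: "B a (B b U) = B Y U" using leib[of a b U] C CU aU Y_def by simp
  have Ya: "B Y a = Z" using anti[of Y a] C CU h3 Y_def by simp
  have "Z = B a (B b X)" using h2 C by simp
  also have "\<dots> = Ad (B Y X) (B b U)" using leib[of a b X] C unfolding Y_def U_def by simp
  finally have YX: "B Y X = Sm (-1) (B b U)" using zero_sum_neg C CU by simp
  have "B Y U = Ad (B (B Y a) X) (B a (B Y X))" using leib[of Y a X] C CU U_def by simp
  also have "\<dots> = Sm (-1) (B a (B b U))" using Ya YX C CU br_sm_r by simp
  finally have "B a (B b U) = Sm (-1) (B a (B b U))" using 1 by simp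
  then show ?thesis using self_neg_zero[of "B a (B b U)"] C CU unfolding U_def by simp
qed

lemma lemma_aXb: assumes C: "a \<in> C" "b \<in> C" "X \<in> C"
  and h1: "B b X = Z" and h2: "B a (B a b) = Z" and h3: "B X (B a X) = Z"
  shows "B (B a X) (B b (B a X)) = Z"
proof -
  define U where "U = B a X"
  define c where "c = B b a"
  define W where "W = B c X"
  have CU: "U \<in> C" "c \<in> C" "W \<in> C" using C by (simp_all add: U_def c_def W_def)
  have 1: "B b U = W" using leib[of b a X] C h1 unfolding U_def W_def c_def by simp
  have 2: "B U X = Z" using anti[of U X] C CU h3 U_def by simp
  have ba: "B b a = Sm (-1) (B a b)" using anti[of b a] C by simp
  have "B a c = Sm (-1) (B a (B a b))" unfolding c_def ba using br_sm_r C by simp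
  then have ac: "B a c = Z" using h2 by simp
  have 3: "B c a = Z" using anti0 ac C CU by simp
  have 4: "B c U = B a W" using leib[of c a X] C CU 3 unfolding U_def W_def by simp
  have 5: "B U c = Sm (-1) (B a W)" using anti[of U c] 4 C CU by simp
  have 6: "B U W = Sm (-1) (B (B a W) X)"
    using leib[of U c X] C CU 5 2 br_sm_l unfolding W_def by simp
  have Xb: "B X b = Z" using anti0 h1 C by simp
  have 7: "B X W = Z" using leib[of X b U] C CU Xb 1 2 anti0[of U X] by simp
  have Xa: "B X a = Sm (-1) U" using anti[of X a] C U_def by simp
  have 8: "B X (B a W) = Sm (-1) (B U W)" using leib[of X a W] C CU 7 Xa br_sm_l by simp
  have 9: "B (B a W) X = B U W" using anti[of "B a W" X] 8 C CU by simp
  have "B U W = Sm (-1) (B U W)" using 6 9 by simp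
  then have "B U W = Z" using self_neg_zero[of "B U W"] C CU by simp
  then show ?thesis using 1 U_def by simp
qed

end

lemma D_sym: "D_cartan n i j = D_cartan n j i"
  unfolding D_cartan_def by auto

lemma M_sym: "M_mat n i j = M_mat n j i"
  unfolding M_mat_def by auto

lemma D_form: assumes "1 \<le> i" "i \<le> n" "1 \<le> k" "k < n"
  shows "D_cartan n i k = (if k = i then 2 else 0) + (if k = i + 1 then (if i + 1 < n then -1 else 0) else 0)
     + (if k = i - 1 then (if i < n then -1 else 0) else 0) + (if k = 2 then (if i = n then -1 else 0) else 0)"
  using assms unfolding D_cartan_def by auto

lemma sum_D: assumes "1 \<le> i" "i \<le> n" "m \<le> n"
  shows "(\<Sum>k\<in>{2..<m}. D_cartan n i k) =
     (if i \<in> {2..<m} then 2 else 0) + (if i + 1 \<in> {2..<m} then (if i + 1 < n then -1 else 0) else 0)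
     + (if i - 1 \<in> {2..<m} then (if i < n then -1 else 0) else 0) + (if 2 \<in> {2..<m} then (if i = n then -1 else 0) else 0)"
proof -
  have "(\<Sum>k\<in>{2..<m}. D_cartan n i k) = (\<Sum>k\<in>{2..<m}. (if k = i then 2 else 0) + (if k = i + 1 then (if i + 1 < n then -1 else 0) else 0)
     + (if k = i - 1 then (if i < n then -1 else 0) else 0) + (if k = 2 then (if i = n then -1 else 0) else 0))"
    by (intro sum.cong refl D_form) (use assms in auto)
  also have "\<dots> = (if i \<in> {2..<m} then 2 else 0) + (if i + 1 \<in> {2..<m} then (if i + 1 < n then -1 else 0) else 0)
     + (if i - 1 \<in> {2..<m} then (if i < n then -1 else 0) else 0) + (if 2 \<in> {2..<m} then (if i = n then -1 else 0) else 0)"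
    by (simp only: sum.distrib sum.delta sum.delta' finite_atLeastLessThan)
  finally show ?thesis .
qed

lemma W1: assumes "2 \<le> m" "m < n"
  shows "D_cartan n m n + (\<Sum>k\<in>{2..<m}. D_cartan n m k) = -1"
proof (cases "m = 2")
  case True
  then show ?thesis using assms by (simp add: D_cartan_def)
next
  case False
  then have "(\<Sum>k\<in>{2..<m}. D_cartan n m k) = -1" using assms by (subst sum_D) auto
  moreover have "D_cartan n m n = 0" using assms False by (simp add: D_cartan_def)
  ultimately show ?thesis by simp
qed

lemma W1': assumes "2 \<le> m" "m < n"
  shows "D_cartan n n m + (\<Sum>k\<in>{2..<m}. D_cartan n k m) = -1"
proof -
  have "(\<lambda>k. D_cartan n k m) = (\<lambda>k. D_cartan n m k)" by (rule ext, rule D_sym)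
  then show ?thesis by (simp only: D_sym[of n n m]) (rule W1[OF assms])
qed

lemma W2: assumes "1 \<le> i" "i < n" "3 \<le> n"
  shows "D_cartan n i n + (\<Sum>k\<in>{2..<n}. D_cartan n i k) = - M_mat n i n"
proof -
  consider "i = 1" | "i = 2" "n = 3" | "i = 2" "n > 3" | "2 < i" "i < n - 1" | "2 < i" "i = n - 1"
    using assms by linarith
  then show ?thesis
  proof cases
    case 1
    then show ?thesis using assms by (subst sum_D) (simp_all add: D_cartan_def M_mat_def)
  next
    case 2
    then show ?thesis using assms by (subst sum_D) (simp_all add: D_cartan_def M_mat_def)
  next
    case 3
    then show ?thesis using assms by (subst sum_D) (simp_all add: D_cartan_def M_mat_def)
  next
    case 4
    then show ?thesis using assms by (subst sum_D) (auto simp add: D_cartan_def M_mat_def)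
  next
    case 5
    then show ?thesis using assms by (subst sum_D) (auto simp add: D_cartan_def M_mat_def)
  qed
qed

lemma W3: assumes "1 \<le> j" "j < n" "3 \<le> n"
  shows "D_cartan n n j + (\<Sum>k\<in>{2..<n}. D_cartan n k j) = - M_mat n n j"
proof -
  have "(\<lambda>k. D_cartan n k j) = (\<lambda>k. D_cartan n j k)" by (rule ext, rule D_sym)
  then show ?thesis by (simp only: D_sym[of n n j] M_sym[of n n j]) (rule W2[OF assms])
qed

lemma W5: assumes "3 \<le> n"
  shows "D_cartan n n n + (\<Sum>k\<in>{2..<n}. D_cartan n n k) = 1"
  using assms by (subst sum_D) (simp_all add: D_cartan_def)

lemma W4: assumes "3 \<le> n"
  shows "(\<Sum>k\<in>{2..<n}. M_mat n k n) = -1"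
proof -
  have "(\<Sum>k\<in>{2..<n}. M_mat n k n) = (\<Sum>k\<in>{2..<n}. if k = n - 1 then -1 else 0)"
    by (rule sum.cong) (use assms in \<open>auto simp: M_mat_def\<close>)
  then show ?thesis using assms by simp
qed

definition opp :: "('a, 'b) lie_alg_scheme \<Rightarrow> ('a, 'b) lie_alg_scheme" where
  "opp L = L\<lparr>lbr := (\<lambda>x y. lbr L y x)\<rparr>"

lemma opp_simps[simp]: "carrier (opp L) = carrier L" "lzero (opp L) = lzero L"
  "ladd (opp L) = ladd L" "lsmul (opp L) = lsmul L" "lbr (opp L) x y = lbr L y x"
  unfolding opp_def by simp_all

context lie begin

lemma jac_opp: assumes "x \<in> C" "y \<in> C" "z \<in> C"
  shows "Ad (B (B z y) x) (Ad (B (B x z) y) (B (B y x) z)) = Z"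
proof -
  have 1: "B (B z y) x = B x (B y z)"
    using anti[of "B z y" x] anti[of z y] assms br_sm_r by simp
  have 2: "B (B x z) y = B y (B z x)"
    using anti[of "B x z" y] anti[of x z] assms br_sm_r by simp
  have 3: "B (B y x) z = B z (B x y)"
    using anti[of "B y x" z] anti[of y x] assms br_sm_r by simp
  show ?thesis unfolding 1 2 3 using jacobi assms by blast
qed

lemma opp_lie: "lie_algebra (opp L)"
  unfolding lie_algebra_def opp_simps
  using ax_zero ax_cl ax_smc ax_assoc ax_comm ax_zadd ax_neg ax_smadd ax_addsm ax_smsm ax_one
  by (simp add: br_add_l br_add_r br_sm_l br_sm_r jac_opp)

end

locale chev = lie +
  fixes n :: nat and x y hh :: "nat \<Rightarrow> 'a"
  assumes n3: "3 \<le> n"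
  and xc: "1 \<le> i \<Longrightarrow> i \<le> n \<Longrightarrow> x i \<in> C"
  and yc: "1 \<le> i \<Longrightarrow> i \<le> n \<Longrightarrow> y i \<in> C"
  and hc: "1 \<le> i \<Longrightarrow> i \<le> n \<Longrightarrow> hh i \<in> C"
  and xy: "1 \<le> i \<Longrightarrow> i \<le> n \<Longrightarrow> 1 \<le> j \<Longrightarrow> j \<le> n \<Longrightarrow> B (x i) (y j) = (if i = j then hh i else Z)"
  and hx: "1 \<le> i \<Longrightarrow> i \<le> n \<Longrightarrow> 1 \<le> j \<Longrightarrow> j \<le> n \<Longrightarrow> B (hh i) (x j) = Sm (of_int (D_cartan n i j)) (x j)"
  and hy: "1 \<le> i \<Longrightarrow> i \<le> n \<Longrightarrow> 1 \<le> j \<Longrightarrow> j \<le> n \<Longrightarrow> B (hh i) (y j) = Sm (of_int (- D_cartan n i j)) (y j)"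
  and sx0: "1 \<le> i \<Longrightarrow> i \<le> n \<Longrightarrow> 1 \<le> j \<Longrightarrow> j \<le> n \<Longrightarrow> i \<noteq> j \<Longrightarrow> D_cartan n i j = 0 \<Longrightarrow> B (x i) (x j) = Z"
  and sx1: "1 \<le> i \<Longrightarrow> i \<le> n \<Longrightarrow> 1 \<le> j \<Longrightarrow> j \<le> n \<Longrightarrow> i \<noteq> j \<Longrightarrow> D_cartan n i j = -1 \<Longrightarrow> B (x i) (B (x i) (x j)) = Z"
  and sy0: "1 \<le> i \<Longrightarrow> i \<le> n \<Longrightarrow> 1 \<le> j \<Longrightarrow> j \<le> n \<Longrightarrow> i \<noteq> j \<Longrightarrow> D_cartan n i j = 0 \<Longrightarrow> B (y i) (y j) = Z"
  and sy1: "1 \<le> i \<Longrightarrow> i \<le> n \<Longrightarrow> 1 \<le> j \<Longrightarrow> j \<le> n \<Longrightarrow> i \<noteq> j \<Longrightarrow> D_cartan n i j = -1 \<Longrightarrow> B (y i) (B (y i) (y j)) = Z"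
begin

definition P :: "nat \<Rightarrow> 'a" where
  "P m = foldl (\<lambda>acc k. B (y k) acc) (y n) [2..<m]"

lemma P2[simp]: "P 2 = y n" unfolding P_def by simp

lemma PS: "2 \<le> m \<Longrightarrow> P (Suc m) = B (y m) (P m)"
  unfolding P_def by (simp add: upt_Suc_append)

lemma Pc: "2 \<le> m \<Longrightarrow> m \<le> n \<Longrightarrow> P m \<in> C"
proof (induction m rule: dec_induct)
  case base then show ?case using yc n3 by simp
next
  case (step m) then show ?case using yc PS by simp
qed

lemma P_comm: assumes a: "a \<in> C" and an: "B a (y n) = Z" and ak: "\<And>k. 2 \<le> k \<Longrightarrow> k < m \<Longrightarrow> B a (y k) = Z"
  and m: "2 \<le> m" "m \<le> n"
  shows "B a (P m) = Z"
  using m ak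
proof (induction m rule: dec_induct)
  case base then show ?case using an by simp
next
  case (step m)
  then have "B a (P m) = Z" by simp
  moreover have "B a (y m) = Z" using step by simp
  ultimately show ?case using PS[of m] step comm0[of a "y m" "P m"] a yc Pc by simp
qed

lemma P_weight: assumes a: "a \<in> C" and an: "B a (y n) = Sm (w n) (y n)"
  and ak: "\<And>k. 2 \<le> k \<Longrightarrow> k < m \<Longrightarrow> B a (y k) = Sm (w k) (y k)"
  and m: "2 \<le> m" "m \<le> n"
  shows "B a (P m) = Sm (w n + (\<Sum>k\<in>{2..<m}. w k)) (P m)"
  using m ak
proof (induction m rule: dec_induct)
  case base then show ?case using an by simp
next
  case (step m)
  then have 1: "B a (P m) = Sm (w n + (\<Sum>k\<in>{2..<m}. w k)) (P m)" by simp
  have 2: "B a (y m) = Sm (w m) (y m)" using step by simp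
  have "B a (P (Suc m)) = Sm (w m + (w n + (\<Sum>k\<in>{2..<m}. w k))) (P (Suc m))"
    using weight_br[OF a _ _ 2 1] PS[of m] step yc Pc by simp
  then show ?case using step by (simp add: sum.atLeastLessThan_Suc algebra_simps)
qed

lemma ad2_yP: assumes "2 \<le> m" "m < n" shows "B (y m) (B (y m) (P m)) = Z"
proof (cases "m = 2")
  case True
  then show ?thesis using sy1[of 2 n] n3 by (simp add: D_cartan_def)
next
  case False
  then obtain m' where m': "m = Suc m'" "2 \<le> m'" using assms by (cases m) auto
  have 1: "B (y m) (P m') = Z"
    using assms m' by (intro P_comm yc sy0) (auto simp: D_cartan_def)
  have 2: "B (y m) (B (y m) (y m')) = Z" using assms m' by (intro sy1) (auto simp: D_cartan_def)
  show ?thesis unfolding m'(1) PS[OF m'(2)]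
    using ad2_r0[of "y (Suc m')" "y m'" "P m'"] 1 2 m' assms yc Pc by simp
qed

lemma yP0: "2 \<le> i \<Longrightarrow> i < m \<Longrightarrow> m \<le> n \<Longrightarrow> B (y i) (P m) = Z"
proof (induction m arbitrary: i rule: nat_less_induct)
  case (1 m)
  then obtain m' where m': "m = Suc m'" "2 \<le> m'" "i \<le> m'" by (cases m) auto
  have Pm: "P m = B (y m') (P m')" using PS m' by simp
  consider "i = m'" | "i + 1 = m'" | "i + 1 < m'" using m' by linarith
  then show ?case
  proof cases
    case 1
    then show ?thesis using Pm ad2_yP[of m'] m' \<open>m \<le> n\<close> by simp
  next
    case 2
    then have m'': "m' = Suc i" "2 \<le> i" using 1 by auto
    have h1: "B (y i) (B (y i) (P i)) = Z"
      using 1(1)[rule_format, of m' i] PS[of i] m'' m' 1(4) by simp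
    have h2: "B (y (Suc i)) (P i) = Z"
      using m'' m' 1 by (intro P_comm yc sy0) (auto simp: D_cartan_def)
    have h3: "B (y i) (B (y i) (y (Suc i))) = Z"
      using m'' m' 1 by (intro sy1) (auto simp: D_cartan_def)
    show ?thesis using trickT[of "y i" "y (Suc i)" "P i", OF _ _ _ h1 h2 h3] Pm PS[of i] m'' m' 1 yc Pc
      by simp
  next
    case 3
    have "B (y i) (y m') = Z" using 3 1 m' by (intro sy0) (auto simp: D_cartan_def)
    moreover have "B (y i) (P m') = Z" using 1 3 m' by simp
    ultimately show ?thesis using comm0[of "y i" "y m'" "P m'"] Pm 1 m' yc Pc by simp
  qed
qed

lemma PP0: "2 \<le> m \<Longrightarrow> Suc m \<le> n \<Longrightarrow> B (P m) (P (Suc m)) = Z"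
proof (induction m rule: dec_induct)
  case base
  have "B (y n) (B (y n) (y 2)) = Z" using sy1[of n 2] n3 by (simp add: D_cartan_def)
  moreover have "B (y 2) (y n) = Sm (-1) (B (y n) (y 2))" using anti[of "y 2" "y n"] yc n3 by simp
  ultimately show ?case using PS[of 2] yc n3 br_sm_r by simp
next
  case (step m)
  have h1: "B (y (Suc m)) (P m) = Z" using step by (intro P_comm yc sy0) (auto simp: D_cartan_def)
  have h2: "B (y m) (B (y m) (y (Suc m))) = Z" using step by (intro sy1) (auto simp: D_cartan_def)
  have h3: "B (P m) (B (y m) (P m)) = Z" using step PS by simp
  show ?case using lemma_aXb[of "y m" "y (Suc m)" "P m", OF _ _ _ h1 h2 h3] PS[of m] PS[of "Suc m"] step yc Pc
    by simp
qed

lemma ad2_y1P: "3 \<le> m \<Longrightarrow> m \<le> n \<Longrightarrow> B (y 1) (B (y 1) (P m)) = Z"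
proof (induction m rule: dec_induct)
  case base
  have "B (y 1) (y n) = Z" using n3 by (intro sy0) (auto simp: D_cartan_def)
  moreover have "B (y 1) (B (y 1) (y 2)) = Z" using n3 by (intro sy1) (auto simp: D_cartan_def)
  ultimately show ?case using ad2_r0[of "y 1" "y 2" "y n"] PS[of 2] n3 yc by (simp add: numeral_3_eq_3)
next
  case (step m)
  have "B (y 1) (y m) = Z" using step by (intro sy0) (auto simp: D_cartan_def)
  then show ?case using ad2_l0[of "y 1" "y m" "P m"] PS[of m] step yc Pc by simp
qed

lemma PPy1: "3 \<le> m \<Longrightarrow> m \<le> n \<Longrightarrow> B (P m) (B (P m) (y 1)) = Z"
proof (induction m rule: dec_induct)
  case base
  have h1: "B (y 1) (y n) = Z" using n3 by (intro sy0) (auto simp: D_cartan_def)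
  have h2: "B (y 2) (B (y 2) (y 1)) = Z" using n3 by (intro sy1) (auto simp: D_cartan_def)
  have h3: "B (y n) (B (y 2) (y n)) = Z" using PP0[of 2] n3 PS[of 2] by (simp add: numeral_3_eq_3)
  have P3: "P 3 = B (y 2) (y n)" using PS[of 2] by (simp add: numeral_3_eq_3)
  have "B (P 3) (B (y 1) (P 3)) = Z"
    using lemma_aXb[of "y 2" "y 1" "y n", OF _ _ _ h1 h2 h3] P3 yc n3 by simp
  moreover have "B (P 3) (y 1) = Sm (-1) (B (y 1) (P 3))" using anti[of "P 3" "y 1"] Pc[of 3] yc n3 by simp
  ultimately show ?case using br_sm_r Pc[of 3] yc n3 by simp
next
  case (step m)
  define a where "a = y m"
  define T where "T = P m"
  define W where "W = B T (y 1)"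
  have C: "a \<in> C" "T \<in> C" "W \<in> C" "y 1 \<in> C" using step yc Pc unfolding a_def T_def W_def by auto
  have a1: "B a (y 1) = Z" unfolding a_def using step by (intro sy0) (auto simp: D_cartan_def)
  have PSm: "P (Suc m) = B a T" unfolding a_def T_def using PS step by simp
  have e1: "B (B a T) (y 1) = B a W"
    using leib[of a T "y 1"] C a1 unfolding W_def by simp
  have t1: "B a (B a T) = Z" unfolding a_def T_def using ad2_yP step by simp
  have t2: "B a (B a W) = Z" unfolding W_def using ad2_r0[of a T "y 1"] C a1 t1 by simp
  have t3: "B a (B a (B T W)) = Z" using step C unfolding T_def W_def by simp
  show ?case unfolding PSm e1 using ad2_split0[OF _ _ _ t1 t2 t3] C by simp
qed

lemma xP_Suc: assumes "2 \<le> m" "m < n" shows "B (x m) (P (Suc m)) = P m"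
proof -
  have 1: "B (x m) (P m) = Z" using assms by (intro P_comm xc) (auto simp: xy)
  have w: "B (hh m) (P m) = Sm ((\<lambda>k. of_int (- D_cartan n m k)) n + (\<Sum>k\<in>{2..<m}. (\<lambda>k. of_int (- D_cartan n m k)) k)) (P m)"
    using assms by (intro P_weight hc hy) auto
  have "(\<lambda>k. of_int (- D_cartan n m k)) n + (\<Sum>k\<in>{2..<m}. (\<lambda>k. of_int (- D_cartan n m k)) k) = (of_int (- (D_cartan n m n + (\<Sum>k\<in>{2..<m}. D_cartan n m k))) :: complex)"
    by (simp add: sum_negf)
  also have "\<dots> = 1" using W1 assms by simp
  finally have w': "B (hh m) (P m) = P m" using w Pc assms by simp
  show ?thesis using leib[of "x m" "y m" "P m"] PS[of m] assms xc yc Pc 1 w' xy by simp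
qed

lemma xP0: assumes "1 \<le> i" "i + 2 \<le> n" shows "B (x i) (P n) = Z"
proof (cases "i = 1")
  case True
  then show ?thesis using assms n3 by (intro P_comm xc) (auto simp: xy)
next
  case False
  have "B (x i) (P m) = Z" if "i + 2 \<le> m" "m \<le> n" for m
    using that
  proof (induction m rule: dec_induct)
    case base
    have 1: "B (x i) (y (Suc i)) = Z" using assms by (simp add: xy)
    have 2: "B (x i) (P (Suc i)) = P i" using xP_Suc assms False by simp
    have 3: "B (y (Suc i)) (P i) = Z" using assms False by (intro P_comm yc sy0) (auto simp: D_cartan_def)
    show ?case using leib[of "x i" "y (Suc i)" "P (Suc i)"] PS[of "Suc i"] 1 2 3 assms False xc yc Pc by simp
  next
    case (step m)
    have "B (x i) (y m) = Z" using step assms by (simp add: xy)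
    then show ?case using comm0[of "x i" "y m" "P m"] PS[of m] step assms xc yc Pc by simp
  qed
  then show ?thesis using assms by simp
qed

lemma ad2_xP: "B (x (n - 1)) (B (x (n - 1)) (P n)) = Z"
proof -
  have 1: "B (x (n - 1)) (P n) = P (n - 1)" using xP_Suc[of "n - 1"] n3 by simp
  have 2: "B (x (n - 1)) (P (n - 1)) = Z" using n3 by (intro P_comm xc) (auto simp: xy)
  show ?thesis using 1 2 by simp
qed

lemma PPx: "B (P n) (B (P n) (x (n - 1))) = Z"
proof -
  have 1: "B (x (n - 1)) (P n) = P (n - 1)" using xP_Suc[of "n - 1"] n3 by simp
  have 2: "B (P n) (x (n - 1)) = Sm (-1) (P (n - 1))" using anti[of "P n" "x (n - 1)"] 1 xc Pc n3 by simp
  have 3: "B (P (n - 1)) (P n) = Z" using PP0[of "n - 1"] n3 by simp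
  have 4: "B (P n) (P (n - 1)) = Z" using anti0[OF _ _ 3] Pc n3 by simp
  show ?thesis unfolding 2 using br_sm_r 4 Pc n3 by simp
qed

lemma hP_weight: assumes "1 \<le> i" "i \<le> n"
  shows "B (hh i) (P n) = Sm (of_int (- (D_cartan n i n + (\<Sum>k\<in>{2..<n}. D_cartan n i k)))) (P n)"
proof -
  have w: "B (hh i) (P n) = Sm ((\<lambda>k. of_int (- D_cartan n i k)) n + (\<Sum>k\<in>{2..<n}. (\<lambda>k. of_int (- D_cartan n i k)) k)) (P n)"
    using assms n3 by (intro P_weight hc hy) auto
  then show ?thesis by (simp add: sum_negf)
qed

lemma hP_M: assumes "1 \<le> i" "i < n"
  shows "B (hh i) (P n) = Sm (of_int (M_mat n i n)) (P n)"
  using hP_weight[of i] W2[of i n] assms n3 by simp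

lemma hnP: "B (hh n) (P n) = Sm (-1) (P n)"
  using hP_weight[of n] W5[of n] n3 by simp

end

context lie begin
lemma dbl: "a \<in> C \<Longrightarrow> q \<in> C \<Longrightarrow> B (B q a) a = B a (B a q)"
  using anti[of q a] anti[of "B a q" a] br_sm_l by simp
end

context chev begin

lemma opp_chev: "chev (opp L) n y x hh"
  apply (rule chev.intro)
   apply (rule lie.intro, rule opp_lie)
  apply (rule chev_axioms.intro)
  apply (simp_all only: opp_simps)
  subgoal using n3 .
  subgoal using yc by blast
  subgoal using xc by blast
  subgoal using hc by blast
  subgoal for i j using xy[of j i] by auto
  subgoal for i j using anti[of "y j" "hh i"] hy[of i j] yc hc sm_sm by simp
  subgoal for i j using anti[of "x j" "hh i"] hx[of i j] xc hc sm_sm by simp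
  subgoal for i j using anti0 sy0[of i j] yc by blast
  subgoal for i j using dbl[of "y i" "y j"] sy1[of i j] yc by simp
  subgoal for i j using anti0 sx0[of i j] xc by blast
  subgoal for i j using dbl[of "x i" "x j"] sx1[of i j] xc by simp
  done

definition Q :: "nat \<Rightarrow> 'a" where
  "Q m = foldl (\<lambda>acc k. B acc (x k)) (x n) [2..<m]"

lemma oP: "chev.P (opp L) n x m = Q m"
proof -
  interpret o: chev "opp L" n y x hh by (rule opp_chev)
  show ?thesis unfolding o.P_def Q_def by simp
qed

lemma Q2[simp]: "Q 2 = x n" unfolding Q_def by simp
lemma QS: "2 \<le> m \<Longrightarrow> Q (Suc m) = B (Q m) (x m)"
  unfolding Q_def by (simp add: upt_Suc_append)

lemma Qc: "2 \<le> m \<Longrightarrow> m \<le> n \<Longrightarrow> Q m \<in> C"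
proof -
  interpret o: chev "opp L" n y x hh by (rule opp_chev)
  show "2 \<le> m \<Longrightarrow> m \<le> n \<Longrightarrow> Q m \<in> C" using o.Pc oP by simp
qed

lemma Q_comm: assumes a: "a \<in> C" and an: "B (x n) a = Z" and ak: "\<And>k. 2 \<le> k \<Longrightarrow> k < m \<Longrightarrow> B (x k) a = Z"
  and m: "2 \<le> m" "m \<le> n"
  shows "B (Q m) a = Z"
proof -
  interpret o: chev "opp L" n y x hh by (rule opp_chev)
  show ?thesis using o.P_comm[of a m] assms oP by simp
qed

lemma xQ0: "2 \<le> i \<Longrightarrow> i < n \<Longrightarrow> B (x i) (Q n) = Z"
proof -
  interpret o: chev "opp L" n y x hh by (rule opp_chev)
  assume "2 \<le> i" "i < n"
  then have "B (Q n) (x i) = Z" using o.yP0[of i n] oP by simp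
  then show ?thesis using anti0[of "Q n" "x i"] xc Qc n3 \<open>2 \<le> i\<close> \<open>i < n\<close> by simp
qed

lemma Qx0: "2 \<le> i \<Longrightarrow> i < n \<Longrightarrow> B (Q n) (x i) = Z"
proof -
  interpret o: chev "opp L" n y x hh by (rule opp_chev)
  assume "2 \<le> i" "i < n"
  then show "B (Q n) (x i) = Z" using o.yP0[of i n] oP by simp
qed

lemma Qy0: "1 \<le> i \<Longrightarrow> i + 2 \<le> n \<Longrightarrow> B (Q n) (y i) = Z"
proof -
  interpret o: chev "opp L" n y x hh by (rule opp_chev)
  assume "1 \<le> i" "i + 2 \<le> n"
  then show "B (Q n) (y i) = Z" using o.xP0[of i] oP by simp
qed

lemma ad2_yQ: "B (y (n - 1)) (B (y (n - 1)) (Q n)) = Z"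
proof -
  interpret o: chev "opp L" n y x hh by (rule opp_chev)
  have "B (B (Q n) (y (n - 1))) (y (n - 1)) = Z" using o.ad2_xP oP by simp
  then show ?thesis using dbl yc Qc n3 by simp
qed

lemma QQy: "B (Q n) (B (Q n) (y (n - 1))) = Z"
proof -
  interpret o: chev "opp L" n y x hh by (rule opp_chev)
  have "B (B (y (n - 1)) (Q n)) (Q n) = Z" using o.PPx oP by simp
  then show ?thesis using dbl yc Qc n3 by simp
qed

lemma ad2_x1Q: "B (x 1) (B (x 1) (Q n)) = Z"
proof -
  interpret o: chev "opp L" n y x hh by (rule opp_chev)
  have "B (B (Q n) (x 1)) (x 1) = Z" using o.ad2_y1P[of n] n3 oP by simp
  then show ?thesis using dbl xc Qc n3 by simp
qed

lemma QQx1: "B (Q n) (B (Q n) (x 1)) = Z"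
proof -
  interpret o: chev "opp L" n y x hh by (rule opp_chev)
  have "B (B (x 1) (Q n)) (Q n) = Z" using o.PPy1[of n] n3 oP by simp
  then show ?thesis using dbl xc Qc n3 by simp
qed

lemma hQ_weight: assumes "1 \<le> i" "i \<le> n"
  shows "B (hh i) (Q n) = Sm (of_int (D_cartan n i n + (\<Sum>k\<in>{2..<n}. D_cartan n i k))) (Q n)"
proof -
  interpret o: chev "opp L" n y x hh by (rule opp_chev)
  have "B (Q n) (hh i) = Sm (of_int (- (D_cartan n i n + (\<Sum>k\<in>{2..<n}. D_cartan n i k)))) (Q n)"
    using o.hP_weight[OF assms] oP by simp
  then show ?thesis using anti[of "hh i" "Q n"] hc Qc assms n3 sm_sm by (simp add: add.commute)
qed

lemma xQ_Suc: assumes "2 \<le> m" "m < n" shows "B (Q (Suc m)) (y m) = Q m"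
proof -
  interpret o: chev "opp L" n y x hh by (rule opp_chev)
  show ?thesis using o.xP_Suc[OF assms] oP by simp
qed

end

lemma of_int_sum_c: "(of_int a + (\<Sum>k\<in>S. of_int (f k)) :: complex) = of_int (a + (\<Sum>k\<in>S. f k))"
  by simp

lemma ad_pow1: "ad_pow L 1 a b = lbr L a b" unfolding ad_pow_def by simp
lemma ad_pow2: "ad_pow L 2 a b = lbr L a (lbr L a b)" unfolding ad_pow_def by (simp add: numeral_2_eq_2)

lemma M_D: "1 \<le> i \<Longrightarrow> i < n \<Longrightarrow> 1 \<le> j \<Longrightarrow> j < n \<Longrightarrow> M_mat n i j = D_cartan n i j"
  unfolding M_mat_def D_cartan_def by auto

lemma D_vals: "i \<noteq> j \<Longrightarrow> D_cartan n i j = 0 \<or> D_cartan n i j = -1"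
  unfolding D_cartan_def by auto

context chev begin

definition Hs :: "nat \<Rightarrow> 'a" where
  "Hs m = foldl (\<lambda>acc k. Ad acc (hh k)) (hh n) [2..<m]"

lemma Hs2[simp]: "Hs 2 = hh n" unfolding Hs_def by simp
lemma HsS: "2 \<le> m \<Longrightarrow> Hs (Suc m) = Ad (Hs m) (hh m)"
  unfolding Hs_def by (simp add: upt_Suc_append)

lemma Hsc: "2 \<le> m \<Longrightarrow> m \<le> n \<Longrightarrow> Hs m \<in> C"
proof (induction m rule: dec_induct)
  case base then show ?case using hc n3 by simp
next
  case (step m) then show ?case using hc HsS by simp
qed

lemma Hs_weight: assumes z: "z \<in> C" and an: "B (hh n) z = Sm (v n) z"
  and ak: "\<And>k. 2 \<le> k \<Longrightarrow> k < m \<Longrightarrow> B (hh k) z = Sm (v k) z"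
  and m: "2 \<le> m" "m \<le> n"
  shows "B (Hs m) z = Sm (v n + (\<Sum>k\<in>{2..<m}. v k)) z"
  using m ak
proof (induction m rule: dec_induct)
  case base then show ?case using an by simp
next
  case (step m)
  then have 1: "B (Hs m) z = Sm (v n + (\<Sum>k\<in>{2..<m}. v k)) z" by simp
  have 2: "B (hh m) z = Sm (v m) z" using step by simp
  have "B (Hs (Suc m)) z = Ad (Sm (v n + (\<Sum>k\<in>{2..<m}. v k)) z) (Sm (v m) z)"
    using HsS[of m] br_add_l[of "Hs m" "hh m" z] step z hc Hsc 1 2 by simp
  also have "\<dots> = Sm (v n + (\<Sum>k\<in>{2..<m}. v k) + v m) z" using add_sm[of z] z by simp
  finally show ?case using step by (simp add: sum.atLeastLessThan_Suc add.assoc)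
qed

lemma PQ: "2 \<le> m \<Longrightarrow> m \<le> n \<Longrightarrow> B (P m) (Q m) = Sm (-1) (Hs m)"
proof (induction m rule: dec_induct)
  case base
  then show ?case using anti[of "y n" "x n"] xy[of n n] xc yc n3 by simp
next
  case (step m)
  define X where "X = P (Suc m)"
  have CC: "X \<in> C" "P m \<in> C" "Q m \<in> C" "x m \<in> C" "y m \<in> C" "Hs m \<in> C" "hh m \<in> C"
    using step Pc Qc xc yc Hsc hc unfolding X_def by auto
  have Xd: "X = B (y m) (P m)" unfolding X_def using PS step by simp
  have IH: "B (P m) (Q m) = Sm (-1) (Hs m)" using step by simp
  have a: "B X (x m) = Sm (-1) (P m)"
    using anti[of X "x m"] xP_Suc[of m] step CC unfolding X_def by simp
  have QP: "B (Q m) (P m) = Hs m" using anti[of "Q m" "P m"] IH CC by simp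
  have b: "B (Q m) (B X (x m)) = Sm (-1) (Hs m)" unfolding a using br_sm_r CC QP by simp
  have Qy: "B (Q m) (y m) = Z"
    using step by (intro Q_comm yc) (auto simp: xy)
  have c1: "B (Q m) X = B (y m) (Hs m)"
    unfolding Xd using leib[of "Q m" "y m" "P m"] CC Qy QP by simp
  have wy: "B (Hs m) (y m) = Sm ((\<lambda>k. of_int (- D_cartan n k m)) n + (\<Sum>k\<in>{2..<m}. (\<lambda>k. of_int (- D_cartan n k m)) k)) (y m)"
    using step by (intro Hs_weight yc hy) auto
  have "(\<lambda>k. of_int (- D_cartan n k m)) n + (\<Sum>k\<in>{2..<m}. (\<lambda>k. of_int (- D_cartan n k m)) k) = (of_int (- (D_cartan n n m + (\<Sum>k\<in>{2..<m}. D_cartan n k m))) :: complex)"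
    by (simp add: sum_negf)
  also have "\<dots> = 1" using W1' step by simp
  finally have wy': "B (Hs m) (y m) = y m" using wy CC by simp
  have c: "B X (Q m) = y m"
    using anti[of X "Q m"] c1 anti[of "y m" "Hs m"] wy' CC by simp
  have d: "B (y m) (x m) = Sm (-1) (hh m)" using anti[of "y m" "x m"] xy[of m m] CC step by simp
  have "B X (Q (Suc m)) = Ad (B (B X (Q m)) (x m)) (B (Q m) (B X (x m)))"
    using QS[of m] leib[of X "Q m" "x m"] step CC by simp
  also have "\<dots> = Ad (Sm (-1) (hh m)) (Sm (-1) (Hs m))" using c d b by simp
  also have "\<dots> = Sm (-1) (Ad (Hs m) (hh m))" using sm_add[of "Hs m" "hh m"] add_comm CC by simp
  finally show ?case using HsS step X_def by simp
qed

definition XX :: "nat \<Rightarrow> 'a" where "XX i = (if i = n then P n else x i)"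
definition YY :: "nat \<Rightarrow> 'a" where "YY i = (if i = n then Q n else y i)"
definition HH :: "nat \<Rightarrow> 'a" where "HH i = (if i = n then B (P n) (Q n) else hh i)"

lemma Pn: "P n \<in> C" using Pc n3 by simp
lemma Qn: "Q n \<in> C" using Qc n3 by simp
lemma Hn: "Hs n \<in> C" using Hsc n3 by simp

lemma XXc: "1 \<le> i \<Longrightarrow> i \<le> n \<Longrightarrow> XX i \<in> C" unfolding XX_def using xc Pn by simp
lemma YYc: "1 \<le> i \<Longrightarrow> i \<le> n \<Longrightarrow> YY i \<in> C" unfolding YY_def using yc Qn by simp
lemma HHc: "1 \<le> i \<Longrightarrow> i \<le> n \<Longrightarrow> HH i \<in> C" unfolding HH_def using hc Pn Qn by simp

lemma HHn: "HH n = Sm (-1) (Hs n)" unfolding HH_def using PQ n3 by simp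

lemma HnX: assumes "1 \<le> j" "j < n" shows "B (HH n) (x j) = Sm (of_int (M_mat n n j)) (x j)"
proof -
  have w: "B (Hs n) (x j) = Sm ((\<lambda>k. of_int (D_cartan n k j)) n + (\<Sum>k\<in>{2..<n}. (\<lambda>k. of_int (D_cartan n k j)) k)) (x j)"
    using assms n3 by (intro Hs_weight xc hx) auto
  then have "B (Hs n) (x j) = Sm (of_int (- M_mat n n j)) (x j)"
    unfolding of_int_sum_c using W3 assms n3 by simp
  then show ?thesis unfolding HHn using br_sm_l Hn xc assms sm_sm by simp
qed

lemma HnY: assumes "1 \<le> j" "j < n" shows "B (HH n) (y j) = Sm (of_int (- M_mat n n j)) (y j)"
proof -
  have w: "B (Hs n) (y j) = Sm ((\<lambda>k. of_int (- D_cartan n k j)) n + (\<Sum>k\<in>{2..<n}. (\<lambda>k. of_int (- D_cartan n k j)) k)) (y j)"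
    using assms n3 by (intro Hs_weight yc hy) auto
  have "(\<lambda>k. of_int (- D_cartan n k j)) n + (\<Sum>k\<in>{2..<n}. (\<lambda>k. of_int (- D_cartan n k j)) k) = (of_int (- (D_cartan n n j + (\<Sum>k\<in>{2..<n}. D_cartan n k j))) :: complex)"
    by (simp add: sum_negf)
  also have "\<dots> = of_int (M_mat n n j)" using W3 assms n3 by simp
  finally have "B (Hs n) (y j) = Sm (of_int (M_mat n n j)) (y j)" using w by simp
  then show ?thesis unfolding HHn using br_sm_l Hn yc assms sm_sm by simp
qed

lemma HnP: "B (HH n) (P n) = Sm 2 (P n)"
proof -
  have w: "B (Hs n) (P n) = Sm ((\<lambda>k. if k = n then -1 else of_int (M_mat n k n)) n + (\<Sum>k\<in>{2..<n}. (\<lambda>k. if k = n then -1 else of_int (M_mat n k n)) k)) (P n)"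
    using n3 by (intro Hs_weight Pn) (auto simp: hnP hP_M)
  have "(\<Sum>k\<in>{2..<n}. (\<lambda>k. if k = n then -1 else of_int (M_mat n k n)) k) = (\<Sum>k\<in>{2..<n}. (of_int (M_mat n k n) :: complex))"
    by (rule sum.cong) auto
  also have "\<dots> = -1" using W4 n3 by (simp flip: of_int_sum)
  finally have "B (Hs n) (P n) = Sm (-2) (P n)" using w by simp
  then show ?thesis unfolding HHn using br_sm_l Hn Pn sm_sm by simp
qed

lemma hQ_M: assumes "1 \<le> i" "i < n"
  shows "B (hh i) (Q n) = Sm (of_int (- M_mat n i n)) (Q n)"
  using hQ_weight[of i] W2[of i n] assms n3 by simp

lemma hnQ: "B (hh n) (Q n) = Sm 1 (Q n)"
  using hQ_weight[of n] W5[of n] n3 by simp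

lemma HnQ: "B (HH n) (Q n) = Sm (-2) (Q n)"
proof -
  have w: "B (Hs n) (Q n) = Sm ((\<lambda>k. if k = n then 1 else of_int (- M_mat n k n)) n + (\<Sum>k\<in>{2..<n}. (\<lambda>k. if k = n then 1 else of_int (- M_mat n k n)) k)) (Q n)"
    using n3 by (intro Hs_weight Qn) (auto simp: hnQ hQ_M)
  have "(\<Sum>k\<in>{2..<n}. (\<lambda>k. if k = n then 1 else of_int (- M_mat n k n)) k) = (\<Sum>k\<in>{2..<n}. (of_int (- M_mat n k n) :: complex))"
    by (rule sum.cong) auto
  also have "\<dots> = 1" using W4 n3 by (simp add: sum_negf flip: of_int_sum)
  finally have "B (Hs n) (Q n) = Sm 2 (Q n)" using w by simp
  then show ?thesis unfolding HHn using br_sm_l Hn Qn sm_sm by simp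
qed

end

lemma M_in: "3 \<le> n \<Longrightarrow> 2 \<le> i \<Longrightarrow> i < n \<Longrightarrow> M_mat n i n = (if i = n - 1 then -1 else 0)"
  unfolding M_mat_def by auto
lemma M_ni: "3 \<le> n \<Longrightarrow> 2 \<le> i \<Longrightarrow> i < n \<Longrightarrow> M_mat n n i = (if i = n - 1 then -1 else 0)"
  unfolding M_mat_def by auto
lemma M_1n: "3 \<le> n \<Longrightarrow> M_mat n 1 n = 1" unfolding M_mat_def by auto
lemma M_n1: "3 \<le> n \<Longrightarrow> M_mat n n 1 = 1" unfolding M_mat_def by auto
lemma M_nn: "M_mat n n n = 2" unfolding M_mat_def by auto
lemma M_pos: "1 \<le> i \<Longrightarrow> i \<le> n \<Longrightarrow> 1 \<le> j \<Longrightarrow> j \<le> n \<Longrightarrow> i \<noteq> j \<Longrightarrow> M_mat n i j > 0 \<Longrightarrow>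
   (i = 1 \<and> j = n) \<or> (i = n \<and> j = 1)"
  unfolding M_mat_def by (auto split: if_splits)

context chev begin

lemma R1: assumes "1 \<le> i" "i \<le> n" "1 \<le> j" "j \<le> n"
  shows "B (HH i) (XX j) = Sm (of_int (M_mat n i j)) (XX j)"
proof (cases "i = n")
  case True
  then show ?thesis
  proof (cases "j = n")
    case True
    then show ?thesis using \<open>i = n\<close> HnP M_nn XX_def by simp
  next
    case False
    then show ?thesis using \<open>i = n\<close> HnX[of j] assms XX_def by simp
  qed
next
  case False
  then show ?thesis
  proof (cases "j = n")
    case True
    then show ?thesis using \<open>i \<noteq> n\<close> hP_M[of i] assms XX_def HH_def by simp
  next
    case False
    then show ?thesis using \<open>i \<noteq> n\<close> hx[of i j] M_D[of i n j] assms XX_def HH_def by simp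
  qed
qed

lemma R2: assumes "1 \<le> i" "i \<le> n" "1 \<le> j" "j \<le> n"
  shows "B (HH i) (YY j) = Sm (of_int (- M_mat n i j)) (YY j)"
proof (cases "i = n")
  case True
  then show ?thesis
  proof (cases "j = n")
    case True
    then show ?thesis using \<open>i = n\<close> HnQ M_nn YY_def by simp
  next
    case False
    then show ?thesis using \<open>i = n\<close> HnY[of j] assms YY_def by simp
  qed
next
  case False
  then show ?thesis
  proof (cases "j = n")
    case True
    then show ?thesis using \<open>i \<noteq> n\<close> hQ_M[of i] assms YY_def HH_def by simp
  next
    case False
    then show ?thesis using \<open>i \<noteq> n\<close> hy[of i j] M_D[of i n j] assms YY_def HH_def by simp
  qed
qed

lemma R3: assumes "1 \<le> i" "i \<le> n" shows "B (XX i) (YY i) = HH i"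
  using xy[of i i] assms unfolding XX_def YY_def HH_def by simp

lemma R4: assumes "1 \<le> i" "i \<le> n" "1 \<le> j" "j \<le> n" "i \<noteq> j" "M_mat n i j \<le> 0"
  shows "B (XX i) (YY j) = Z"
proof -
  consider "i < n" "j < n" | "i < n" "j = n" | "i = n" "j < n" using assms by linarith
  then show ?thesis
  proof cases
    case 1 then show ?thesis using xy[of i j] assms XX_def YY_def by simp
  next
    case 2
    then have "i \<noteq> 1" using assms M_1n n3 by auto
    then show ?thesis using 2 xQ0[of i] assms XX_def YY_def by simp
  next
    case 3
    then have "j \<noteq> 1" using assms M_n1 n3 by auto
    then have "B (y j) (P n) = Z" using 3 yP0[of j n] assms by simp
    then show ?thesis using 3 anti0[of "y j" "P n"] yc Pn assms XX_def YY_def by simp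
  qed
qed

lemma R5: assumes "1 \<le> i" "i \<le> n" "1 \<le> j" "j \<le> n" "i \<noteq> j" "M_mat n i j \<le> 0"
  shows "B (YY i) (XX j) = Z"
proof -
  consider "i < n" "j < n" | "i < n" "j = n" | "i = n" "j < n" using assms by linarith
  then show ?thesis
  proof cases
    case 1 then show ?thesis using xy[of j i] anti0[of "x j" "y i"] xc yc assms XX_def YY_def by simp
  next
    case 2
    then have "i \<noteq> 1" using assms M_1n n3 by auto
    then show ?thesis using 2 yP0[of i n] assms XX_def YY_def by simp
  next
    case 3
    then have "j \<noteq> 1" using assms M_n1 n3 by auto
    then show ?thesis using 3 Qx0[of j] assms XX_def YY_def by simp
  qed
qed

lemma R6: assumes "1 \<le> i" "i \<le> n" "1 \<le> j" "j \<le> n" "i \<noteq> j" "M_mat n i j \<le> 0"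
  shows "ad_pow L (nat (1 - M_mat n i j)) (XX i) (XX j) = Z"
proof -
  consider "i < n" "j < n" | "i < n" "j = n" | "i = n" "j < n" using assms by linarith
  then show ?thesis
  proof cases
    case 1
    then have M: "M_mat n i j = D_cartan n i j" using M_D assms by simp
    have "D_cartan n i j = 0 \<or> D_cartan n i j = -1" using D_vals assms(5) by blast
    then show ?thesis
    proof
      assume "D_cartan n i j = 0"
      then show ?thesis using M 1 sx0[of i j] assms XX_def by (simp add: ad_pow_def)
    next
      assume "D_cartan n i j = -1"
      then show ?thesis using M 1 sx1[of i j] assms XX_def by (simp add: ad_pow2)
    qed
  next
    case 2
    then have i2: "2 \<le> i" using assms M_1n n3 by (cases "i = 1") auto
    show ?thesis
    proof (cases "i = n - 1")
      case True
      then show ?thesis using 2 i2 M_in n3 ad2_xP XX_def by (simp add: ad_pow2)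
    next
      case False
      then show ?thesis using 2 i2 M_in n3 xP0[of i] XX_def by (simp add: ad_pow_def)
    qed
  next
    case 3
    then have j2: "2 \<le> j" using assms M_n1 n3 by (cases "j = 1") auto
    show ?thesis
    proof (cases "j = n - 1")
      case True
      then show ?thesis using 3 j2 M_ni n3 PPx XX_def by (simp add: ad_pow2)
    next
      case False
      then have "B (x j) (P n) = Z" using j2 3 xP0[of j] by simp
      then show ?thesis using False 3 j2 M_ni n3 anti0[of "x j" "P n"] xc Pn XX_def by (simp add: ad_pow_def)
    qed
  qed
qed

lemma R7: assumes "1 \<le> i" "i \<le> n" "1 \<le> j" "j \<le> n" "i \<noteq> j" "M_mat n i j \<le> 0"
  shows "ad_pow L (nat (1 - M_mat n i j)) (YY i) (YY j) = Z"
proof -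
  consider "i < n" "j < n" | "i < n" "j = n" | "i = n" "j < n" using assms by linarith
  then show ?thesis
  proof cases
    case 1
    then have M: "M_mat n i j = D_cartan n i j" using M_D assms by simp
    have "D_cartan n i j = 0 \<or> D_cartan n i j = -1" using D_vals assms(5) by blast
    then show ?thesis
    proof
      assume "D_cartan n i j = 0"
      then show ?thesis using M 1 sy0[of i j] assms YY_def by (simp add: ad_pow_def)
    next
      assume "D_cartan n i j = -1"
      then show ?thesis using M 1 sy1[of i j] assms YY_def by (simp add: ad_pow2)
    qed
  next
    case 2
    then have i2: "2 \<le> i" using assms M_1n n3 by (cases "i = 1") auto
    show ?thesis
    proof (cases "i = n - 1")
      case True
      then show ?thesis using 2 i2 M_in n3 ad2_yQ YY_def by (simp add: ad_pow2)
    next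
      case False
      then have "B (Q n) (y i) = Z" using i2 2 Qy0[of i] by simp
      then show ?thesis using False 2 i2 M_in n3 anti0[of "Q n" "y i"] yc Qn YY_def by (simp add: ad_pow_def)
    qed
  next
    case 3
    then have j2: "2 \<le> j" using assms M_n1 n3 by (cases "j = 1") auto
    show ?thesis
    proof (cases "j = n - 1")
      case True
      then show ?thesis using 3 j2 M_ni n3 QQy YY_def by (simp add: ad_pow2)
    next
      case False
      then show ?thesis using 3 j2 M_ni n3 Qy0[of j] YY_def by (simp add: ad_pow_def)
    qed
  qed
qed

lemma R8: assumes "1 \<le> i" "i \<le> n" "1 \<le> j" "j \<le> n" "i \<noteq> j" "M_mat n i j > 0"
  shows "B (XX i) (XX j) = Z"
proof -
  have 0: "B (x 1) (P n) = Z" using xP0[of 1] n3 by simp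
  show ?thesis using M_pos[OF assms] 0 anti0[of "x 1" "P n"] xc Pn n3 XX_def by auto
qed

lemma R9: assumes "1 \<le> i" "i \<le> n" "1 \<le> j" "j \<le> n" "i \<noteq> j" "M_mat n i j > 0"
  shows "B (YY i) (YY j) = Z"
proof -
  have 0: "B (Q n) (y 1) = Z" using Qy0[of 1] n3 by simp
  show ?thesis using M_pos[OF assms] 0 anti0[of "Q n" "y 1"] yc Qn n3 YY_def by auto
qed

lemma R10: assumes "1 \<le> i" "i \<le> n" "1 \<le> j" "j \<le> n" "i \<noteq> j" "M_mat n i j > 0"
  shows "ad_pow L (nat (M_mat n i j + 1)) (XX i) (YY j) = Z"
proof -
  have "nat (1 + 1) = (2::nat)" by simp
  from M_pos[OF assms] show ?thesis
  proof
    assume "i = 1 \<and> j = n" then show ?thesis using ad2_x1Q n3 M_1n[of n] XX_def YY_def by (simp add: ad_pow2)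
  next
    assume "i = n \<and> j = 1" then show ?thesis using PPy1[of n] n3 M_n1[of n] XX_def YY_def by (simp add: ad_pow2)
  qed
qed

lemma R11: assumes "1 \<le> i" "i \<le> n" "1 \<le> j" "j \<le> n" "i \<noteq> j" "M_mat n i j > 0"
  shows "ad_pow L (nat (M_mat n i j + 1)) (YY i) (XX j) = Z"
proof -
  from M_pos[OF assms] show ?thesis
  proof
    assume "i = 1 \<and> j = n" then show ?thesis using ad2_y1P[of n] n3 M_1n[of n] XX_def YY_def by (simp add: ad_pow2)
  next
    assume "i = n \<and> j = 1" then show ?thesis using QQx1 n3 M_n1[of n] XX_def YY_def by (simp add: ad_pow2)
  qed
qed

end

primrec ev :: "('a, 'b) lie_alg_scheme \<Rightarrow> ('g \<Rightarrow> 'a) \<Rightarrow> 'g lterm \<Rightarrow> 'a" where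
  "ev M \<gamma> (Gen g) = \<gamma> g"
| "ev M \<gamma> TZero = lzero M"
| "ev M \<gamma> (TAdd a b) = ladd M (ev M \<gamma> a) (ev M \<gamma> b)"
| "ev M \<gamma> (TSmul c a) = lsmul M c (ev M \<gamma> a)"
| "ev M \<gamma> (TBr a b) = lbr M (ev M \<gamma> a) (ev M \<gamma> b)"

lemma ev_tad: "ev M \<gamma> (tad_pow k a b) = ad_pow M k (ev M \<gamma> a) (ev M \<gamma> b)"
  unfolding tad_pow_def ad_pow_def by (induction k) auto

lemma lclass_refl: "t \<in> lclass R t" unfolding lclass_def by (simp add: lcong.refl)

lemma lclass_eq: "lcong R s t \<Longrightarrow> lclass R s = lclass R t"
  unfolding lclass_def by (auto intro: lcong.trans lcong.sym)

lemma union_const: "a \<in> A \<Longrightarrow> (\<And>x. x \<in> A \<Longrightarrow> F x = S) \<Longrightarrow> (\<Union>x\<in>A. F x) = S"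
  by auto

lemma pl_add: "ladd (presented_lie R) (lclass R s) (lclass R t) = lclass R (TAdd s t)"
  unfolding presented_lie_def apply simp
  apply (rule union_const[OF lclass_refl])
  apply (rule union_const[OF lclass_refl])
  apply (rule lclass_eq[symmetric])
  apply (rule lcong.cong_add) apply (auto simp: lclass_def)
  done

lemma pl_br: "lbr (presented_lie R) (lclass R s) (lclass R t) = lclass R (TBr s t)"
  unfolding presented_lie_def apply simp
  apply (rule union_const[OF lclass_refl])
  apply (rule union_const[OF lclass_refl])
  apply (rule lclass_eq[symmetric])
  apply (rule lcong.cong_br) apply (auto simp: lclass_def)
  done

lemma pl_sm: "lsmul (presented_lie R) c (lclass R s) = lclass R (TSmul c s)"
  unfolding presented_lie_def apply simp
  apply (rule union_const[OF lclass_refl])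
  apply (rule lclass_eq[symmetric])
  apply (rule lcong.cong_smul) apply (auto simp: lclass_def)
  done

context lie begin

lemmas add_assoc' = add_assoc
lemmas add_comm' = add_comm
lemmas add_neg' = add_neg
lemmas jacobi' = jacobi

lemma ev_c: "(\<And>g. \<gamma> g \<in> C) \<Longrightarrow> ev L \<gamma> t \<in> C"
  by (induction t) auto

lemma ev_cong: assumes g: "\<And>g. \<gamma> g \<in> C" and rel: "\<And>s t. (s, t) \<in> R \<Longrightarrow> ev L \<gamma> s = ev L \<gamma> t"
  and lc: "lcong R s t"
  shows "ev L \<gamma> s = ev L \<gamma> t"
proof -
  have evc: "\<And>t. ev L \<gamma> t \<in> C" by (rule ev_c) (rule g)
  from lc show ?thesis
proof (induction rule: lcong.induct)
  case (rel s t) then show ?case using assms by blast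
next
  case (add_assoc s t u) then show ?case using add_assoc' evc by simp
next
  case (add_comm s t) then show ?case using add_comm' evc by simp
next
  case (add_zero s) then show ?case using evc by simp
next
  case (add_neg s) then show ?case using add_neg' evc by simp
next
  case (smul_add c s t) then show ?case using sm_add evc by simp
next
  case (add_smul c d s) then show ?case using add_sm evc by simp
next
  case (smul_smul c d s) then show ?case using sm_sm evc by simp
next
  case (smul_one s) then show ?case using evc by simp
next
  case (br_add_left s t u) then show ?case using br_add_l evc by simp
next
  case (br_add_right u s t) then show ?case using br_add_r evc by simp
next
  case (br_smul_left c s t) then show ?case using br_sm_l evc by simp
next
  case (br_smul_right s c t) then show ?case using br_sm_r evc by simp
next
  case (br_alt s) then show ?case using evc by simp
next
  case (jacobi s t u) then show ?case using jacobi' evc by simp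
qed auto
qed

lemma presented_hom: assumes g: "\<And>g. \<gamma> g \<in> C" and rel: "\<And>s t. (s, t) \<in> R \<Longrightarrow> ev L \<gamma> s = ev L \<gamma> t"
  shows "\<exists>\<phi>. lie_hom (presented_lie R) L \<phi> \<and> (\<forall>t. \<phi> (lclass R t) = ev L \<gamma> t)"
proof -
  define \<phi> where "\<phi> A = ev L \<gamma> (SOME t. t \<in> A)" for A
  have phi: "\<phi> (lclass R t) = ev L \<gamma> t" for t
  proof -
    have "(SOME s. s \<in> lclass R t) \<in> lclass R t" using lclass_refl by (rule someI)
    then have "lcong R t (SOME s. s \<in> lclass R t)" unfolding lclass_def by simp
    then show ?thesis unfolding \<phi>_def using ev_cong[OF g rel] by metis
  qed
  have car: "carrier (presented_lie R) = range (lclass R)" unfolding presented_lie_def by simp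
  have "lie_hom (presented_lie R) L \<phi>"
    unfolding lie_hom_def car
    by (auto simp: phi pl_add pl_br pl_sm ev_c g)
  then show ?thesis using phi by blast
qed

end

lemma chev_of: assumes n: "n \<ge> 3" and cg: "chevalley_generators g n (D_cartan n) e f h"
  shows "chev g n e f h"
proof -
  have sl: "simple_lie_algebra g" and gens: "\<forall>i\<in>{1..n}. e i \<in> carrier g \<and> f i \<in> carrier g \<and> h i \<in> carrier g"
    and rels: "\<forall>i\<in>{1..n}. \<forall>j\<in>{1..n}.
        lbr g (h i) (h j) = lzero g \<and>
        lbr g (e i) (f j) = (if i = j then h i else lzero g) \<and>
        lbr g (h i) (e j) = lsmul g (of_int (D_cartan n i j)) (e j) \<and>
        lbr g (h i) (f j) = lsmul g (of_int (- D_cartan n i j)) (f j) \<and>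
        (i \<noteq> j \<longrightarrow> ad_pow g (nat (1 - D_cartan n i j)) (e i) (e j) = lzero g \<and>
                   ad_pow g (nat (1 - D_cartan n i j)) (f i) (f j) = lzero g)"
    using cg unfolding chevalley_generators_def by blast+
  have la: "lie_algebra g" using sl unfolding simple_lie_algebra_def by blast
  show ?thesis
    apply (rule chev.intro)
     apply (rule lie.intro, rule la)
    apply (rule chev_axioms.intro)
    subgoal using n .
    subgoal using gens by auto
    subgoal using gens by auto
    subgoal using gens by auto
    subgoal for i j using rels by auto
    subgoal for i j using rels by auto
    subgoal for i j using rels by auto
    subgoal for i j using rels[rule_format, of i j] by (simp add: ad_pow_def)
    subgoal for i j using rels[rule_format, of i j] by (simp add: ad_pow_def numeral_2_eq_2)
    subgoal for i j using rels[rule_format, of i j] by (simp add: ad_pow_def)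
    subgoal for i j using rels[rule_format, of i j] by (simp add: ad_pow_def numeral_2_eq_2)
    done
qed

theorem lemma2p4:
  fixes g :: "('a, 'b) lie_alg_scheme"
    and e f h :: "nat \<Rightarrow> 'a"
    and n :: nat
  assumes "n \<ge> 3"
    and "chevalley_generators g n (D_cartan n) e f h"
  shows "\<exists>\<phi>. lie_hom (gim n (M_mat n)) g \<phi> \<and>
     (\<forall>i\<in>{1..n-1}. \<phi> (gim_gen_elt n (M_mat n) (GE i)) = e i \<and>
                    \<phi> (gim_gen_elt n (M_mat n) (GF i)) = f i) \<and>
     \<phi> (gim_gen_elt n (M_mat n) (GE n)) = foldl (\<lambda>acc k. lbr g (f k) acc) (f n) [2..<n] \<and>
     \<phi> (gim_gen_elt n (M_mat n) (GF n)) = foldl (\<lambda>acc k. lbr g acc (e k)) (e n) [2..<n]"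
proof -
  interpret c: chev g n e f h by (rule chev_of[OF assms])
  define \<gamma> where "\<gamma> x = (case x of
      GE i \<Rightarrow> if 1 \<le> i \<and> i \<le> n then c.XX i else lzero g
    | GF i \<Rightarrow> if 1 \<le> i \<and> i \<le> n then c.YY i else lzero g
    | GH i \<Rightarrow> if 1 \<le> i \<and> i \<le> n then c.HH i else lzero g)" for x
  have gc: "\<gamma> x \<in> carrier g" for x
    unfolding \<gamma>_def using c.XXc c.YYc c.HHc by (cases x) auto
  have gE: "1 \<le> i \<Longrightarrow> i \<le> n \<Longrightarrow> \<gamma> (GE i) = c.XX i" for i unfolding \<gamma>_def by simp
  have gF: "1 \<le> i \<Longrightarrow> i \<le> n \<Longrightarrow> \<gamma> (GF i) = c.YY i" for i unfolding \<gamma>_def by simp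
  have gH: "1 \<le> i \<Longrightarrow> i \<le> n \<Longrightarrow> \<gamma> (GH i) = c.HH i" for i unfolding \<gamma>_def by simp
  have rel: "ev g \<gamma> s = ev g \<gamma> t" if st: "(s, t) \<in> gim_rels n (M_mat n)" for s t
    using st unfolding gim_rels_def
    by (auto simp: gE gF gH ev_tad c.R1 c.R2 c.R3 c.R4 c.R5 c.R6 c.R7 c.R8 c.R9 c.R10 c.R11)
  obtain \<phi> where hom: "lie_hom (presented_lie (gim_rels n (M_mat n))) g \<phi>"
    and ev: "\<And>t. \<phi> (lclass (gim_rels n (M_mat n)) t) = ev g \<gamma> t"
    using c.presented_hom[of \<gamma> "gim_rels n (M_mat n)", OF gc rel] by blast
  have XXn: "c.XX n = foldl (\<lambda>acc k. lbr g (f k) acc) (f n) [2..<n]"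
    unfolding c.XX_def c.P_def by simp
  have YYn: "c.YY n = foldl (\<lambda>acc k. lbr g acc (e k)) (e n) [2..<n]"
    unfolding c.YY_def c.Q_def by simp
  have 1: "\<forall>i\<in>{1..n-1}. \<phi> (gim_gen_elt n (M_mat n) (GE i)) = e i \<and>
                    \<phi> (gim_gen_elt n (M_mat n) (GF i)) = f i"
  proof
    fix i assume i: "i \<in> {1..n-1}"
    then have "i \<noteq> n" "1 \<le> i" "i \<le> n" by auto
    then show "\<phi> (gim_gen_elt n (M_mat n) (GE i)) = e i \<and> \<phi> (gim_gen_elt n (M_mat n) (GF i)) = f i"
      unfolding gim_gen_elt_def ev using gE gF by (simp add: c.XX_def c.YY_def)
  qed
  have 2: "\<phi> (gim_gen_elt n (M_mat n) (GE n)) = foldl (\<lambda>acc k. lbr g (f k) acc) (f n) [2..<n]"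
    unfolding gim_gen_elt_def ev using gE[of n] XXn assms(1) by simp
  have 3: "\<phi> (gim_gen_elt n (M_mat n) (GF n)) = foldl (\<lambda>acc k. lbr g acc (e k)) (e n) [2..<n]"
    unfolding gim_gen_elt_def ev using gF[of n] YYn assms(1) by simp
  show ?thesis using hom 1 2 3 unfolding gim_def by blast
qed

end
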